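(* For any graph $\Gamma_1$ and any graph $\Gamma_2$ of order $n_2$ and maximum degree $\Delta_2$, and any integer $k$, $\gamma_{k-\Delta_2}^o(\Gamma_1\times\Gamma_2)\le n_2\,\gamma_k^o(\Gamma_1)$.
   Context: Graphs are finite and simple. In a graph $G=(V,E)$, for $S\subseteq V$ and $v\in V$, $\delta_S(v)$ is the number of neighbours of $v$ in $S$, $\overline{S}=V\setminus S$, and $\partial(S)$ the set of vertices of $\overline{S}$ with a neighbour in $S$. A nonempty $S$ is an offensive $k$-alliance in $G$ if $\delta_S(v)\ge\delta_{\overline{S}}(v)+k$ for every $v\in\partial(S)$, and a global offensive $k$-alliance if moreover it is dominating. $\gamma_k^o(G)$ is the minimum cardinality of a global offensive $k$-alliance in $G$. The Cartesian product $\Gamma_1\times\Gamma_2$ has vertex set $V_1\times V_2$, with $(u,v)\sim(u',v')$ iff either $u=u'$ and $v\sim v'$, or $v=v'$ and $u\sim u'$. *)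

theory Defs
  imports Main
begin

definition simple_graph :: "'a set \<Rightarrow> ('a \<Rightarrow> 'a \<Rightarrow> bool) \<Rightarrow> bool" where
  "simple_graph V E \<longleftrightarrow> finite V \<and> (\<forall>u v. E u v \<longrightarrow> u \<in> V \<and> v \<in> V)
     \<and> (\<forall>u v. E u v \<longrightarrow> E v u) \<and> (\<forall>v. \<not> E v v)"

definition degree :: "'a set \<Rightarrow> ('a \<Rightarrow> 'a \<Rightarrow> bool) \<Rightarrow> 'a \<Rightarrow> nat" where
  "degree V E v = card {u \<in> V. E v u}"

definition max_degree :: "'a set \<Rightarrow> ('a \<Rightarrow> 'a \<Rightarrow> bool) \<Rightarrow> nat" where
  "max_degree V E = Max ((degree V E) ` V)"

definition delta :: "('a \<Rightarrow> 'a \<Rightarrow> bool) \<Rightarrow> 'a set \<Rightarrow> 'a \<Rightarrow> nat" where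
  "delta E S v = card {u \<in> S. E v u}"

definition boundary :: "'a set \<Rightarrow> ('a \<Rightarrow> 'a \<Rightarrow> bool) \<Rightarrow> 'a set \<Rightarrow> 'a set" where
  "boundary V E S = {v \<in> V - S. \<exists>u \<in> S. E v u}"

definition offensive_alliance :: "'a set \<Rightarrow> ('a \<Rightarrow> 'a \<Rightarrow> bool) \<Rightarrow> int \<Rightarrow> 'a set \<Rightarrow> bool" where
  "offensive_alliance V E k S \<longleftrightarrow> S \<noteq> {} \<and> S \<subseteq> V \<and>
     (\<forall>v \<in> boundary V E S. int (delta E S v) \<ge> int (delta E (V - S) v) + k)"

definition dominating :: "'a set \<Rightarrow> ('a \<Rightarrow> 'a \<Rightarrow> bool) \<Rightarrow> 'a set \<Rightarrow> bool" where
  "dominating V E S \<longleftrightarrow> S \<subseteq> V \<and> (\<forall>v \<in> V - S. \<exists>u \<in> S. E v u)"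

definition global_offensive_alliance :: "'a set \<Rightarrow> ('a \<Rightarrow> 'a \<Rightarrow> bool) \<Rightarrow> int \<Rightarrow> 'a set \<Rightarrow> bool" where
  "global_offensive_alliance V E k S \<longleftrightarrow> offensive_alliance V E k S \<and> dominating V E S"

definition gamma_o :: "int \<Rightarrow> 'a set \<Rightarrow> ('a \<Rightarrow> 'a \<Rightarrow> bool) \<Rightarrow> nat" where
  "gamma_o k V E = (LEAST n. \<exists>S. global_offensive_alliance V E k S \<and> card S = n)"

definition cart_edge :: "('a \<Rightarrow> 'a \<Rightarrow> bool) \<Rightarrow> ('b \<Rightarrow> 'b \<Rightarrow> bool) \<Rightarrow> 'a \<times> 'b \<Rightarrow> 'a \<times> 'b \<Rightarrow> bool" where
  "cart_edge E1 E2 = (\<lambda>(u, v) (u', v'). (u = u' \<and> E2 v v') \<or> (v = v' \<and> E1 u u'))"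

end

theory Submission
  imports Defs
begin

lemma goa_exists:
  assumes "V \<noteq> {}"
  shows "global_offensive_alliance V E k V"
  using assms unfolding global_offensive_alliance_def offensive_alliance_def dominating_def boundary_def
  by auto

lemma gamma_ex:
  assumes "V \<noteq> {}"
  shows "\<exists>S. global_offensive_alliance V E k S \<and> card S = gamma_o k V E"
  unfolding gamma_o_def
  by (rule LeastI_ex) (use goa_exists[OF assms] in blast)

theorem mainTheorem14:
  fixes V1 :: "'a set" and E1 :: "'a \<Rightarrow> 'a \<Rightarrow> bool"
    and V2 :: "'b set" and E2 :: "'b \<Rightarrow> 'b \<Rightarrow> bool" and k :: int
  assumes "simple_graph V1 E1" and "V1 \<noteq> {}"
    and "simple_graph V2 E2" and "V2 \<noteq> {}"
  shows "gamma_o (k - int (max_degree V2 E2)) (V1 \<times> V2) (cart_edge E1 E2)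
           \<le> card V2 * gamma_o k V1 E1"
proof -
  obtain S where gS: "global_offensive_alliance V1 E1 k S" and cS: "card S = gamma_o k V1 E1"
    using gamma_ex[OF assms(2)] by blast
  have SV: "S \<subseteq> V1" "S \<noteq> {}" and dom: "\<forall>v \<in> V1 - S. \<exists>u \<in> S. E1 v u"
    and off: "\<forall>v \<in> boundary V1 E1 S. int (delta E1 S v) \<ge> int (delta E1 (V1 - S) v) + k"
    using gS unfolding global_offensive_alliance_def offensive_alliance_def dominating_def by auto
  have fin1: "finite V1" and fin2: "finite V2" and irr1: "\<And>v. \<not> E1 v v" and irr2: "\<And>v. \<not> E2 v v"
    and in2: "\<And>u v. E2 u v \<Longrightarrow> v \<in> V2"
    using assms(1,3) unfolding simple_graph_def by auto
  let ?D = "max_degree V2 E2"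
  have degle: "degree V2 E2 v \<le> ?D" if "v \<in> V2" for v
    unfolding max_degree_def using fin2 that by (intro Max_ge) auto
  let ?T = "S \<times> V2"
  let ?E = "cart_edge E1 E2"
  have off2: "int (delta ?E ?T x) \<ge> int (delta ?E (V1 \<times> V2 - ?T) x) + (k - int ?D)"
    if x: "x \<in> boundary (V1 \<times> V2) ?E ?T" for x
  proof -
    obtain u v where xuv: "x = (u, v)" by (cases x)
    have u: "u \<in> V1" "u \<notin> S" and v: "v \<in> V2" using x xuv unfolding boundary_def by auto
    have ub: "u \<in> boundary V1 E1 S" using dom u unfolding boundary_def by auto
    have A: "{y \<in> ?T. ?E x y} = (\<lambda>u'. (u', v)) ` {u' \<in> S. E1 u u'}"
      using u v xuv unfolding cart_edge_def by auto
    have cA: "delta ?E ?T x = delta E1 S u"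
      unfolding delta_def A by (rule card_image) (auto simp: inj_on_def)
    have B: "{y \<in> V1 \<times> V2 - ?T. ?E x y} \<subseteq> (\<lambda>u'. (u', v)) ` {u' \<in> V1 - S. E1 u u'} \<union> (\<lambda>v'. (u, v')) ` {v' \<in> V2. E2 v v'}"
      using u v xuv unfolding cart_edge_def by auto
    have "delta ?E (V1 \<times> V2 - ?T) x \<le> card ((\<lambda>u'. (u', v)) ` {u' \<in> V1 - S. E1 u u'} \<union> (\<lambda>v'. (u, v')) ` {v' \<in> V2. E2 v v'})"
      unfolding delta_def by (rule card_mono[OF _ B]) (use fin1 fin2 in auto)
    also have "\<dots> \<le> card ((\<lambda>u'. (u', v)) ` {u' \<in> V1 - S. E1 u u'}) + card ((\<lambda>v'. (u, v')) ` {v' \<in> V2. E2 v v'})"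
      by (rule card_Un_le)
    also have "\<dots> = delta E1 (V1 - S) u + degree V2 E2 v"
      unfolding delta_def degree_def
      by (subst card_image, auto simp: inj_on_def)+
    finally have "delta ?E (V1 \<times> V2 - ?T) x \<le> delta E1 (V1 - S) u + ?D"
      using degle[OF v] by linarith
    then show ?thesis using off ub cA by force
  qed
  have gT: "global_offensive_alliance (V1 \<times> V2) ?E (k - int ?D) ?T"
    unfolding global_offensive_alliance_def offensive_alliance_def dominating_def
  proof (intro conjI ballI)
    show "?T \<noteq> {}" using SV assms(4) by auto
    show "?T \<subseteq> V1 \<times> V2" using SV by auto
    show "?T \<subseteq> V1 \<times> V2" using SV by auto
    fix x assume "x \<in> V1 \<times> V2 - ?T"
    then obtain u v where xuv: "x = (u, v)" "u \<in> V1 - S" "v \<in> V2" by auto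
    then obtain s where "s \<in> S" "E1 u s" using dom by auto
    then show "\<exists>y \<in> ?T. ?E x y" using xuv by (intro bexI[of _ "(s, v)"]) (auto simp: cart_edge_def)
  qed (use off2 in auto)
  have "gamma_o (k - int ?D) (V1 \<times> V2) ?E \<le> card ?T"
    unfolding gamma_o_def by (rule Least_le) (use gT in blast)
  also have "card ?T = card V2 * gamma_o k V1 E1" using cS by (simp add: card_cartesian_product)
  finally show ?thesis .
qed

end
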